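(* Let $0<T\le\infty$, and let $F,G\in C^2((0,T))\cap C^1([0,T))$ satisfy $F'(t)\ge0$ and $G(t)\ge 0$ for all $t$. Suppose that for all $t\in(0,T)$, $$F''(t)\ge A(t+1)^{-\alpha}G(t)^q,\qquad G''(t)\ge B(t+1)^{-\beta}F'(t)^p,$$ where $A,B>0$, $p,q>1$ and $\alpha,\beta\ge0$ are constants. Assume $G'(0)>0$. Assume also that there are constants $\kappa>0$, $a>0$ and $t_0\ge0$ such that $G(t)\ge\kappa t^a$ for all $t\in[t_0,T)$. If $$\max\{t_0,\ G(0)/G'(0),\ 1\}<T/2\qquad\text{and}\qquad \beta+\alpha p<p+2+a(pq-1),$$ then $$T\le C\,\kappa^{-\frac{pq-1}{p+2+a(pq-1)-(\beta+\alpha p)}},$$ where $C$ depends only on $A,B,p,q,\alpha,\beta,a$. *)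

theory Defs
  imports "HOL-Analysis.Analysis"
begin

end

theory Submission
  imports Defs "HOL-Analysis.Analysis"
begin


lemma mvt_lb:
  fixes f f' :: "real \<Rightarrow> real"
  assumes "u \<le> v" "\<And>x. u \<le> x \<Longrightarrow> x \<le> v \<Longrightarrow> DERIV f x :> f' x \<and> f' x \<ge> k"
  shows "f v \<ge> f u + k * (v - u)"
proof -
  have "(\<lambda>x. f x - k * x) u \<le> (\<lambda>x. f x - k * x) v"
  proof (rule DERIV_nonneg_imp_nondecreasing[OF assms(1)])
    fix x assume "u \<le> x" "x \<le> v"
    with assms(2) have d: "DERIV f x :> f' x" and k: "f' x \<ge> k" by auto
    have "DERIV (\<lambda>x. f x - k * x) x :> f' x - k"
      by (auto intro!: derivative_eq_intros d)
    then show "\<exists>y. DERIV (\<lambda>x. f x - k * x) x :> y \<and> y \<ge> 0" using k by auto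
  qed
  then show ?thesis by (simp add: algebra_simps)
qed

lemma step:
  fixes G G1 G2 H F2 :: "real \<Rightarrow> real" and s0 T a1 b1 p q s \<tau> m :: real
  assumes p: "p > 0" and q: "q > 0" and a1: "a1 > 0" and b1: "b1 > 0"
    and der: "\<And>t. s0 \<le> t \<Longrightarrow> t < T \<Longrightarrow> DERIV G t :> G1 t \<and> DERIV H t :> F2 t \<and> DERIV G1 t :> G2 t"
    and ineq: "\<And>t. s0 \<le> t \<Longrightarrow> t < T \<Longrightarrow> G1 t \<ge> 0 \<and> H t \<ge> 0 \<and> F2 t \<ge> a1 * G t powr q \<and> G2 t \<ge> b1 * H t powr p"
    and s: "s0 \<le> s" "\<tau> > 0" "s + \<tau> < T" and m: "m > 0" "G s \<ge> m"
  shows "G (s + \<tau>) \<ge> m + b1 * (a1 * m powr q * (\<tau>/3)) powr p * (\<tau>/3) * (\<tau>/3)"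
proof -
  have mono: "G u \<le> G v" if "s0 \<le> u" "u \<le> v" "v < T" for u v
    using mvt_lb[of u v G G1 0] der ineq that by force
  have Gm: "G t \<ge> m" if "s \<le> t" "t \<le> s + \<tau>" for t
    using mono[of s t] that s m by auto
  define h where "h = a1 * m powr q * (\<tau>/3)"
  have h0: "h \<ge> 0" using a1 m s by (simp add: h_def)
  have Hh: "H t \<ge> h" if "s + \<tau>/3 \<le> t" "t \<le> s + \<tau>" for t
  proof -
    have "H t \<ge> H s + (a1 * m powr q) * (t - s)"
    proof (rule mvt_lb)
      fix x assume x: "s \<le> x" "x \<le> t"
      then have "G x \<ge> m" using Gm that by auto
      then have "G x powr q \<ge> m powr q" using m q by (intro powr_mono2) auto
      then have "a1 * G x powr q \<ge> a1 * m powr q" using a1 by simp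
      then show "DERIV H x :> F2 x \<and> F2 x \<ge> a1 * m powr q"
        using der[of x] ineq[of x] x s that by fastforce
    qed (use that s in auto)
    moreover have "H s \<ge> 0" using ineq[of s] s by auto
    moreover have "(a1 * m powr q) * (t - s) \<ge> h" unfolding h_def
      using that a1 m by (intro mult_left_mono) auto
    ultimately show ?thesis by linarith
  qed
  define c where "c = b1 * h powr p"
  have G1c: "G1 t \<ge> c * (\<tau>/3)" if "s + 2*\<tau>/3 \<le> t" "t \<le> s + \<tau>" for t
  proof -
    have "G1 t \<ge> G1 (s + \<tau>/3) + c * (t - (s + \<tau>/3))"
    proof (rule mvt_lb)
      fix x assume x: "s + \<tau>/3 \<le> x" "x \<le> t"
      then have "H x \<ge> h" using Hh that by auto
      then have "H x powr p \<ge> h powr p" using h0 p by (intro powr_mono2) auto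
      then have "b1 * H x powr p \<ge> c" using b1 unfolding c_def by simp
      then show "DERIV G1 x :> G2 x \<and> G2 x \<ge> c"
        using der[of x] ineq[of x] x s that by fastforce
    qed (use that s in auto)
    moreover have "G1 (s + \<tau>/3) \<ge> 0" using ineq[of "s + \<tau>/3"] s by auto
    moreover have "c * (t - (s + \<tau>/3)) \<ge> c * (\<tau>/3)" using that b1
      unfolding c_def by (intro mult_left_mono) auto
    ultimately show ?thesis by linarith
  qed
  have "G (s + \<tau>) \<ge> G (s + 2*\<tau>/3) + (c * (\<tau>/3)) * (s + \<tau> - (s + 2*\<tau>/3))"
  proof (rule mvt_lb)
    fix x assume x: "s + 2*\<tau>/3 \<le> x" "x \<le> s + \<tau>"
    then show "DERIV G x :> G1 x \<and> G1 x \<ge> c * (\<tau>/3)"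
      using der[of x] G1c[of x] s by auto
  qed (use s in auto)
  moreover have "G (s + 2*\<tau>/3) \<ge> m" using Gm s by auto
  ultimately show ?thesis unfolding c_def h_def by (simp add: algebra_simps)
qed


lemma key_id:
  fixes a1 b1 p q m :: real
  assumes "p > 0" "a1 > 0" "b1 > 0" "m > 0"
  defines "x \<equiv> (b1 * a1 powr p) powr (-1/(p+2)) * m powr (- ((p*q-1)/(p+2)))"
  shows "b1 * (a1 * m powr q * x) powr p * x * x = m"
proof -
  have p2: "p + 2 > 0" using assms by simp
  have x0: "x > 0" using assms by (simp add: x_def)
  have lx: "ln x = (-1/(p+2)) * (ln b1 + p * ln a1) - ((p*q-1)/(p+2)) * ln m"
    using assms by (simp add: x_def ln_mult ln_powr)
  have "ln (b1 * (a1 * m powr q * x) powr p * x * x) = ln b1 + p * (ln a1 + q * ln m + ln x) + 2 * ln x"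
    using assms(1-4) x0 by (simp add: ln_mult ln_powr)
  also have "\<dots> = ln m"
    unfolding lx using assms(1-4) by (simp add: divide_simps p2) (simp add: algebra_simps)
  finally have e: "ln (b1 * (a1 * m powr q * x) powr p * x * x) = ln m" .
  have "b1 * (a1 * m powr q * x) powr p * x * x > 0" using assms(1-4) x0 by simp
  then show ?thesis using e assms(4) by (simp add: ln_inj_iff)
qed

lemma pow2_powr:
  fixes g M :: real assumes "M > 0"
  shows "(M * 2^k) powr g = M powr g * (2 powr g)^k"
proof -
  have "(2::real)^k = 2 powr (real k)" by (simp add: powr_realpow)
  then have "((2::real)^k) powr g = (2 powr g)^k"
    by (simp add: powr_powr powr_power mult.commute)
  then show ?thesis using assms by (simp add: powr_mult)
qed


lemma core:
  fixes G G1 G2 H F2 :: "real \<Rightarrow> real" and s0 T a1 b1 p q M :: real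
  assumes p: "p > 0" and q: "q > 0" and pq: "p * q > 1" and a1: "a1 > 0" and b1: "b1 > 0"
    and M: "M > 0" and sT: "s0 < T"
    and der: "\<And>t. s0 \<le> t \<Longrightarrow> t < T \<Longrightarrow> DERIV G t :> G1 t \<and> DERIV H t :> F2 t \<and> DERIV G1 t :> G2 t"
    and ineq: "\<And>t. s0 \<le> t \<Longrightarrow> t < T \<Longrightarrow> G1 t \<ge> 0 \<and> H t \<ge> 0 \<and> F2 t \<ge> a1 * G t powr q \<and> G2 t \<ge> b1 * H t powr p"
    and G0: "G s0 \<ge> M"
  shows "T - s0 \<le> 3 * (b1 * a1 powr p) powr (-1/(p+2)) * M powr (- ((p*q-1)/(p+2))) / (1 - 2 powr (- ((p*q-1)/(p+2))))"
proof (rule ccontr)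
  define g where "g = (p*q-1)/(p+2)"
  define K where "K = (b1 * a1 powr p) powr (-1/(p+2))"
  define r where "r = (2::real) powr (-g)"
  define S where "S = 3 * K * M powr (-g) / (1 - r)"
  assume "\<not> ?thesis"
  then have ST: "s0 + S < T" unfolding S_def K_def r_def g_def by simp
  have g0: "g > 0" using pq p unfolding g_def by simp
  have r0: "r > 0" unfolding r_def by simp
  have r1: "r < 1" unfolding r_def using g0 powr_less_mono[of "-g" 0 "2::real"] by simp
  have K0: "K > 0" unfolding K_def using a1 b1 by simp
  have S0: "S \<ge> 0" unfolding S_def using K0 M r1 by simp
  have mono: "G u \<le> G v" if "s0 \<le> u" "u \<le> v" "v < T" for u v
    using mvt_lb[of u v G G1 0] der ineq that by force
  define t where "t k = s0 + S * (1 - r^k)" for k :: nat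
  have tle: "s0 \<le> t k \<and> t k \<le> s0 + S" for k
  proof -
    have "r^k \<le> 1" "r^k \<ge> 0" using r0 r1 by (auto simp: power_le_one)
    then show ?thesis unfolding t_def using S0 by (simp add: mult_left_le)
  qed
  have tS: "t (Suc k) = t k + 3 * (K * (M * 2^k) powr (-g))" for k
  proof -
    have "(M * 2^k) powr (-g) = M powr (-g) * r^k" unfolding r_def using pow2_powr[OF M] .
    moreover have "S * (1 - r) = 3 * K * M powr (-g)" unfolding S_def using r1 by simp
    ultimately have e: "S * (1 - r) * r^k = 3 * K * (M * 2^k) powr (-g)" by simp
    show ?thesis unfolding t_def using e by (simp add: algebra_simps)
  qed
  have Gt: "G (t k) \<ge> M * 2^k" for k
  proof (induction k)
    case 0 then show ?case using G0 by (simp add: t_def)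
  next
    case (Suc k)
    define m where "m = M * 2^k"
    define x where "x = K * m powr (-g)"
    have m0: "m > 0" using M by (simp add: m_def)
    have x0: "x > 0" using K0 m0 by (simp add: x_def)
    have "G (t k + 3*x) \<ge> m + b1 * (a1 * m powr q * (3*x/3)) powr p * (3*x/3) * (3*x/3)"
      apply (rule step[OF p q a1 b1 der ineq])
      using tle[of k] tle[of "Suc k"] ST tS[of k] x0 m0 Suc.IH
      by (auto simp: x_def m_def)
    also have "b1 * (a1 * m powr q * (3*x/3)) powr p * (3*x/3) * (3*x/3) = m"
      using key_id[OF p a1 b1 m0] unfolding x_def K_def g_def by simp
    finally show ?case using tS[of k] by (simp add: x_def m_def)
  qed
  obtain k where k: "G (s0 + S) / M < 2^k" using real_arch_pow[of 2] by fastforce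
  have "G (t k) \<le> G (s0 + S)" using mono tle ST by auto
  with Gt[of k] have "M * 2^k \<le> G (s0 + S)" by linarith
  with k M show False by (simp add: field_simps)
qed


definition Dd :: "real \<Rightarrow> real \<Rightarrow> real \<Rightarrow> real \<Rightarrow> real \<Rightarrow> real" where
  "Dd p q \<alpha> \<beta> a = p + 2 + a * (p * q - 1) - (\<beta> + \<alpha> * p)"

definition Ee :: "real \<Rightarrow> real \<Rightarrow> real \<Rightarrow> real \<Rightarrow> real \<Rightarrow> real \<Rightarrow> real \<Rightarrow> real" where
  "Ee A B p q \<alpha> \<beta> a = (p + 2) * (ln 3 - ln (1 - 2 powr (- ((p*q-1)/(p+2)))) + ln 2)
      - ln B - p * ln A + (\<beta> + \<alpha> * p) * ln 2 + a * (p * q - 1) * ln 2"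

lemma aux_mul: fixes c d X Y Z :: real assumes "c \<noteq> 0"
  shows "c * (X + (-1/c) * Y - (d/c) * Z) = c * X - Y - d * Z"
  using assms by (simp add: field_simps)

lemma main_real:
  fixes A B p q \<alpha> \<beta> a \<kappa> t0 T :: real and G G1 G2 F1 F2 :: "real \<Rightarrow> real"
  assumes A: "A > 0" and B: "B > 0" and p: "p > 1" and q: "q > 1" and al: "\<alpha> \<ge> 0" and be: "\<beta> \<ge> 0" and a: "a > 0"
    and D: "Dd p q \<alpha> \<beta> a > 0"
    and T: "T > 2" and t0: "t0 < T/2" "t0 \<ge> 0" and ka: "\<kappa> > 0"
    and der: "\<And>t. 0 < t \<Longrightarrow> t < T \<Longrightarrow> DERIV G t :> G1 t \<and> DERIV F1 t :> F2 t \<and> DERIV G1 t :> G2 t"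
    and cont: "continuous_on {0..T/2} G1"
    and nonneg: "\<And>t. 0 \<le> t \<Longrightarrow> t < T \<Longrightarrow> F1 t \<ge> 0 \<and> G t \<ge> 0"
    and ode: "\<And>t. 0 < t \<Longrightarrow> t < T \<Longrightarrow> F2 t \<ge> A * (t + 1) powr (- \<alpha>) * G t powr q \<and>
        G2 t \<ge> B * (t + 1) powr (- \<beta>) * F1 t powr p"
    and G10: "G1 0 > 0"
    and Gk: "\<And>t. t0 \<le> t \<Longrightarrow> t < T \<Longrightarrow> G t \<ge> \<kappa> * t powr a"
  shows "T \<le> exp (Ee A B p q \<alpha> \<beta> a / Dd p q \<alpha> \<beta> a) * \<kappa> powr (- (p * q - 1) / Dd p q \<alpha> \<beta> a)"
proof -
  define a1 where "a1 = A * (2*T) powr (-\<alpha>)"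
  define b1 where "b1 = B * (2*T) powr (-\<beta>)"
  define M where "M = \<kappa> * (T/2) powr a"
  define g where "g = (p*q-1)/(p+2)"
  have pq: "p * q > 1" using p q by (metis less_trans mult_less_cancel_left1 one_less_numeral_iff semiring_norm(76) zero_less_one mult_strict_mono' order_less_imp_le mult_1_right)
  have a10: "a1 > 0" "b1 > 0" "M > 0" using A B ka T by (auto simp: a1_def b1_def M_def)
  have G2pos: "G2 t \<ge> 0" if "0 < t" "t < T" for t
  proof -
    have "B * (t + 1) powr (- \<beta>) * F1 t powr p \<ge> 0" using B by simp
    then show ?thesis using ode[OF that] by linarith
  qed
  have G1h: "G1 (T/2) \<ge> G1 0"
  proof (rule DERIV_nonneg_imp_increasing_open[of 0 "T/2" G1])
    fix x :: real assume x: "0 < x" "x < T/2"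
    have xT: "x < T" using x T by linarith
    show "\<exists>y. DERIV G1 x :> y \<and> y \<ge> 0" using der[OF x(1) xT] G2pos[OF x(1) xT] by blast
  qed (use T cont in auto)
  have G1pos: "G1 t \<ge> 0" if "T/2 \<le> t" "t < T" for t
    using mvt_lb[of "T/2" t G1 G2 0] der G2pos that T G1h G10 by force
  have core_res: "T - T/2 \<le> 3 * (b1 * a1 powr p) powr (-1/(p+2)) * M powr (- ((p*q-1)/(p+2))) / (1 - 2 powr (- ((p*q-1)/(p+2))))"
  proof (rule core[where G=G and ?G1.0=G1 and ?G2.0=G2 and H=F1 and ?F2.0=F2])
    fix t assume t: "T/2 \<le> t" "t < T"
    then show "DERIV G t :> G1 t \<and> DERIV F1 t :> F2 t \<and> DERIV G1 t :> G2 t" using der T by auto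
    have t1: "0 < t + 1" "t + 1 \<le> 2 * T" using t T by auto
    have w1: "(t + 1) powr (-\<alpha>) \<ge> (2*T) powr (-\<alpha>)" using powr_mono2'[of "-\<alpha>" "t+1" "2*T"] t1 al by simp
    have w2: "(t + 1) powr (-\<beta>) \<ge> (2*T) powr (-\<beta>)" using powr_mono2'[of "-\<beta>" "t+1" "2*T"] t1 be by simp
    have "a1 * G t powr q \<le> A * (t + 1) powr (- \<alpha>) * G t powr q"
      unfolding a1_def using A w1 by (intro mult_right_mono) auto
    moreover have "b1 * F1 t powr p \<le> B * (t + 1) powr (- \<beta>) * F1 t powr p"
      unfolding b1_def using B w2 by (intro mult_right_mono) auto
    ultimately show "G1 t \<ge> 0 \<and> F1 t \<ge> 0 \<and> F2 t \<ge> a1 * G t powr q \<and> G2 t \<ge> b1 * F1 t powr p"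
      using ode[of t] nonneg[of t] G1pos[OF t] t T by auto
  next
    show "G (T/2) \<ge> M" unfolding M_def using Gk[of "T/2"] t0 T by auto
  qed (use p q pq a10 T in auto)
  define r where "r = (2::real) powr (-g)"
  define L where "L = ln T"
  define l2 where "l2 = ln (2::real)"
  have g0: "g > 0" using pq p unfolding g_def by simp
  have r1: "r < 1" unfolding r_def using g0 powr_less_mono[of "-g" 0 "2::real"] by simp
  have p2: "p + 2 > 0" using p by simp
  have T0: "T > 0" using T by simp
  define Y where "Y = 3 * (b1 * a1 powr p) powr (-1/(p+2)) * M powr (- g) / (1 - r)"
  have Y0: "Y > 0" unfolding Y_def using a10 r1 by simp
  have cr: "T/2 \<le> Y" using core_res unfolding Y_def r_def g_def by simp
  have h: "L - l2 \<le> ln Y"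
  proof -
    have "ln (T/2) \<le> ln Y" using cr Y0 T0 by simp
    moreover have "ln (T/2) = L - l2" unfolding L_def l2_def using T0 by (simp add: ln_div)
    ultimately show ?thesis by simp
  qed
  have l2T: "ln (2*T) = l2 + L" unfolding L_def l2_def using T0 by (simp add: ln_mult)
  have lT2: "ln (T/2) = L - l2" unfolding L_def l2_def using T0 by (simp add: ln_div)
  have lnY: "ln Y = ln 3 - ln (1-r) + (-1/(p+2)) * ((ln B - \<beta> * (l2 + L)) + p * (ln A - \<alpha> * (l2 + L))) - g * (ln \<kappa> + a * (L - l2))"
    unfolding Y_def a1_def b1_def M_def using A B ka T0 r1
    by (simp add: ln_mult ln_div ln_powr L_def l2_def algebra_simps)
  define R where "R = (ln 3 - ln (1-r)) + (-1/(p+2)) * ((ln B - \<beta> * (l2 + L)) + p * (ln A - \<alpha> * (l2 + L))) - g * (ln \<kappa> + a * (L - l2))"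
  have h1: "L - l2 \<le> R" using h lnY unfolding R_def by simp
  have h2: "(p+2) * (L - l2) \<le> (p+2) * R" using h1 p2 by (intro mult_left_mono) auto
  have h3: "(p+2) * R = (p+2) * (ln 3 - ln (1-r)) - ((ln B - \<beta> * (l2 + L)) + p * (ln A - \<alpha> * (l2 + L))) - (p*q-1) * (ln \<kappa> + a * (L - l2))"
    unfolding R_def g_def using p2 by (intro aux_mul) simp
  have h4: "Dd p q \<alpha> \<beta> a * L \<le> Ee A B p q \<alpha> \<beta> a - (p*q-1) * ln \<kappa>"
  proof -
    have "Ee A B p q \<alpha> \<beta> a - (p*q-1) * ln \<kappa> - Dd p q \<alpha> \<beta> a * L = (p+2) * R - (p+2) * (L - l2)"
      unfolding h3 Ee_def Dd_def r_def g_def l2_def by (simp add: algebra_simps)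
    then show ?thesis using h2 by linarith
  qed
  have h5: "L \<le> Ee A B p q \<alpha> \<beta> a / Dd p q \<alpha> \<beta> a + (- (p * q - 1) / Dd p q \<alpha> \<beta> a) * ln \<kappa>"
    using h4 D by (simp add: field_simps)
  have "T = exp L" unfolding L_def using T0 by simp
  also have "\<dots> \<le> exp (Ee A B p q \<alpha> \<beta> a / Dd p q \<alpha> \<beta> a + (- (p * q - 1) / Dd p q \<alpha> \<beta> a) * ln \<kappa>)"
    using h5 by simp
  also have "\<dots> = exp (Ee A B p q \<alpha> \<beta> a / Dd p q \<alpha> \<beta> a) * \<kappa> powr (- (p * q - 1) / Dd p q \<alpha> \<beta> a)"
    using ka by (simp add: powr_def exp_add)
  finally show ?thesis .
qed


lemma restr:
  fixes A B p q \<alpha> \<beta> a \<kappa> t0 R :: real and T :: ereal and F G G1 G2 F1 F2 :: "real \<Rightarrow> real"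
  assumes A: "A > 0" and B: "B > 0" and p: "p > 1" and q: "q > 1" and al: "\<alpha> \<ge> 0" and be: "\<beta> \<ge> 0" and a: "a > 0"
    and D: "Dd p q \<alpha> \<beta> a > 0"
    and R: "R > 2" "t0 < R/2" "ereal R \<le> T" and t0: "t0 \<ge> 0" and ka: "\<kappa> > 0"
    and d1: "\<forall>t. 0 \<le> t \<and> ereal t < T \<longrightarrow>
        (F has_real_derivative F1 t) (at t within {s. 0 \<le> s \<and> ereal s < T}) \<and>
        (G has_real_derivative G1 t) (at t within {s. 0 \<le> s \<and> ereal s < T})"
    and c1: "continuous_on {s. 0 \<le> s \<and> ereal s < T} G1"
    and d2: "\<forall>t. 0 < t \<and> ereal t < T \<longrightarrow>
        (F1 has_real_derivative F2 t) (at t) \<and> (G1 has_real_derivative G2 t) (at t)"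
    and nn: "\<forall>t. 0 \<le> t \<and> ereal t < T \<longrightarrow> F1 t \<ge> 0 \<and> G t \<ge> 0"
    and ode: "\<forall>t. 0 < t \<and> ereal t < T \<longrightarrow>
        F2 t \<ge> A * (t + 1) powr (- \<alpha>) * G t powr q \<and>
        G2 t \<ge> B * (t + 1) powr (- \<beta>) * F1 t powr p"
    and G10: "G1 0 > 0"
    and Gk: "\<forall>t. t0 \<le> t \<and> ereal t < T \<longrightarrow> G t \<ge> \<kappa> * t powr a"
  shows "R \<le> exp (Ee A B p q \<alpha> \<beta> a / Dd p q \<alpha> \<beta> a) * \<kappa> powr (- (p * q - 1) / Dd p q \<alpha> \<beta> a)"
proof (rule main_real[OF A B p q al be a D R(1) R(2) t0 ka])
  have lt: "ereal t < T" if "t < R" for t using that R(3) less_le_trans[of "ereal t" "ereal R" T] by simp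
  fix t :: real assume t: "0 < t" "t < R"
  have e: "at t within {s. 0 \<le> s \<and> ereal s < T} = at t"
    by (rule at_within_open_subset[of t "{0<..<R}"]) (use t lt in auto)
  have "(G has_real_derivative G1 t) (at t within {s. 0 \<le> s \<and> ereal s < T})"
    using d1 t lt[OF t(2)] by auto
  then have "DERIV G t :> G1 t" unfolding e .
  then show "DERIV G t :> G1 t \<and> DERIV F1 t :> F2 t \<and> DERIV G1 t :> G2 t"
    using d2 t lt[OF t(2)] by auto
next
  have lt: "ereal t < T" if "t < R" for t using that R(3) less_le_trans[of "ereal t" "ereal R" T] by simp
  show "continuous_on {0..R/2} G1"
    by (rule continuous_on_subset[OF c1]) (use lt R in auto)
next
  have lt: "ereal t < T" if "t < R" for t using that R(3) less_le_trans[of "ereal t" "ereal R" T] by simp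
  fix t assume t: "0 \<le> t" "t < R"
  then show "F1 t \<ge> 0 \<and> G t \<ge> 0" using nn lt by auto
next
  have lt: "ereal t < T" if "t < R" for t using that R(3) less_le_trans[of "ereal t" "ereal R" T] by simp
  fix t assume t: "0 < t" "t < R"
  then show "F2 t \<ge> A * (t + 1) powr (- \<alpha>) * G t powr q \<and> G2 t \<ge> B * (t + 1) powr (- \<beta>) * F1 t powr p"
    using ode lt by auto
next
  have lt: "ereal t < T" if "t < R" for t using that R(3) less_le_trans[of "ereal t" "ereal R" T] by simp
  fix t assume t: "t0 \<le> t" "t < R"
  then show "G t \<ge> \<kappa> * t powr a" using Gk lt by auto
qed (rule G10)

theorem lemma2p1:
  fixes A B p q \<alpha> \<beta> a :: real
  assumes "A > 0" "B > 0" "p > 1" "q > 1" "\<alpha> \<ge> 0" "\<beta> \<ge> 0" "a > 0"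
    and "\<beta> + \<alpha> * p < p + 2 + a * (p * q - 1)"
  shows "\<exists>C > 0. \<forall>(T::ereal) (F::real \<Rightarrow> real) F1 F2 (G::real \<Rightarrow> real) G1 G2 (\<kappa>::real) (t0::real).
    T > 0 \<longrightarrow>
    (\<forall>t. 0 \<le> t \<and> ereal t < T \<longrightarrow>
        (F has_real_derivative F1 t) (at t within {s. 0 \<le> s \<and> ereal s < T}) \<and>
        (G has_real_derivative G1 t) (at t within {s. 0 \<le> s \<and> ereal s < T})) \<longrightarrow>
    continuous_on {s. 0 \<le> s \<and> ereal s < T} F1 \<longrightarrow>
    continuous_on {s. 0 \<le> s \<and> ereal s < T} G1 \<longrightarrow>
    (\<forall>t. 0 < t \<and> ereal t < T \<longrightarrow>
        (F1 has_real_derivative F2 t) (at t) \<and> (G1 has_real_derivative G2 t) (at t)) \<longrightarrow>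
    continuous_on {s. 0 < s \<and> ereal s < T} F2 \<longrightarrow>
    continuous_on {s. 0 < s \<and> ereal s < T} G2 \<longrightarrow>
    (\<forall>t. 0 \<le> t \<and> ereal t < T \<longrightarrow> F1 t \<ge> 0 \<and> G t \<ge> 0) \<longrightarrow>
    (\<forall>t. 0 < t \<and> ereal t < T \<longrightarrow>
        F2 t \<ge> A * (t + 1) powr (- \<alpha>) * G t powr q \<and>
        G2 t \<ge> B * (t + 1) powr (- \<beta>) * F1 t powr p) \<longrightarrow>
    G1 0 > 0 \<longrightarrow>
    \<kappa> > 0 \<longrightarrow> t0 \<ge> 0 \<longrightarrow>
    (\<forall>t. t0 \<le> t \<and> ereal t < T \<longrightarrow> G t \<ge> \<kappa> * t powr a) \<longrightarrow>
    ereal (max t0 (max (G 0 / G1 0) 1)) < T / 2 \<longrightarrow>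
    T \<le> ereal (C * \<kappa> powr (- (p * q - 1) / (p + 2 + a * (p * q - 1) - (\<beta> + \<alpha> * p))))"
proof -
  define C where "C = exp (Ee A B p q \<alpha> \<beta> a / Dd p q \<alpha> \<beta> a)"
  have D: "Dd p q \<alpha> \<beta> a > 0" using assms(8) by (simp add: Dd_def)
  have C0: "C > 0" by (simp add: C_def)
  show ?thesis
  proof (intro exI[of _ C] conjI allI impI)
    show "C > 0" by (rule C0)
    fix T :: ereal and F F1 F2 G G1 G2 :: "real \<Rightarrow> real" and \<kappa> t0 :: real
    assume T0: "T > 0"
      and d1: "\<forall>t. 0 \<le> t \<and> ereal t < T \<longrightarrow>
        (F has_real_derivative F1 t) (at t within {s. 0 \<le> s \<and> ereal s < T}) \<and>
        (G has_real_derivative G1 t) (at t within {s. 0 \<le> s \<and> ereal s < T})"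
      and "continuous_on {s. 0 \<le> s \<and> ereal s < T} F1"
      and c1: "continuous_on {s. 0 \<le> s \<and> ereal s < T} G1"
      and d2: "\<forall>t. 0 < t \<and> ereal t < T \<longrightarrow>
        (F1 has_real_derivative F2 t) (at t) \<and> (G1 has_real_derivative G2 t) (at t)"
      and "continuous_on {s. 0 < s \<and> ereal s < T} F2"
      and "continuous_on {s. 0 < s \<and> ereal s < T} G2"
      and nn: "\<forall>t. 0 \<le> t \<and> ereal t < T \<longrightarrow> F1 t \<ge> 0 \<and> G t \<ge> 0"
      and ode: "\<forall>t. 0 < t \<and> ereal t < T \<longrightarrow>
        F2 t \<ge> A * (t + 1) powr (- \<alpha>) * G t powr q \<and>
        G2 t \<ge> B * (t + 1) powr (- \<beta>) * F1 t powr p"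
      and G10: "G1 0 > 0" and ka: "\<kappa> > 0" and t0: "t0 \<ge> 0"
      and Gk: "\<forall>t. t0 \<le> t \<and> ereal t < T \<longrightarrow> G t \<ge> \<kappa> * t powr a"
      and mx: "ereal (max t0 (max (G 0 / G1 0) 1)) < T / 2"
    define e where "e = - (p * q - 1) / Dd p q \<alpha> \<beta> a"
    have R: "R \<le> C * \<kappa> powr e" if "R > 2" "t0 < R/2" "ereal R \<le> T" for R
      using restr[OF assms(1-7) D that t0 ka d1 c1 d2 nn ode G10 Gk] unfolding C_def e_def .
    have ee: "- (p * q - 1) / (p + 2 + a * (p * q - 1) - (\<beta> + \<alpha> * p)) = e"
      unfolding e_def Dd_def ..
    show "T \<le> ereal (C * \<kappa> powr (- (p * q - 1) / (p + 2 + a * (p * q - 1) - (\<beta> + \<alpha> * p))))"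
    proof (cases T)
      case (real r)
      have "t0 * 2 < r \<and> 2 < r" using mx unfolding real by simp
      then have "r > 2" "t0 < r/2" by auto
      then have "r \<le> C * \<kappa> powr e" using R[of r] real by simp
      then show ?thesis unfolding ee using real by simp
    next
      case PInf
      define R0 where "R0 = 2 * (t0 + 1 + C * \<kappa> powr e)"
      have "C * \<kappa> powr e > 0" using C0 ka by simp
      then have "R0 \<le> C * \<kappa> powr e" using R[of R0] t0 PInf unfolding R0_def by simp
      moreover have "C * \<kappa> powr e > 0" using C0 ka by simp
      ultimately have False using t0 unfolding R0_def by simp
      then show ?thesis ..
    next
      case MInf
      then show ?thesis using T0 by simp
    qed
  qed
qed

end
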